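(* Let $p=p(n)$ and $k=k(n)$ satisfy $p\ge 10^6\log n/n$ and $pk\le 10^{-3}$. Then for any $k$-bounded edge colouring $\phi$ of $K_n$, with probability $1-o(1)$ (as $n\to\infty$) every vertex $v$ of $\Gamma=G(n,p)$ satisfies $\deg_{\Gamma(\phi)}(v)\ge\frac23\deg_\Gamma(v)$.
   Context: $G(n,p)$ is the random graph on $[n]$ with each edge present independently with probability $p$; here it is viewed as a random subgraph of $K_n$. An edge colouring $\phi$ of $K_n$ is $k$-bounded if no colour is used on more than $k$ edges. For a subgraph $\Gamma\subseteq K_n$, $\Gamma(\phi)$ denotes the graph obtained from $\Gamma$ by deleting every edge of $\Gamma$ whose colour under $\phi$ appears on more than one edge of $\Gamma$. *)

theory Defs
  imports Complex_Main
begin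

definition Kn_edges :: "nat \<Rightarrow> nat set set" where
  "Kn_edges n = {e. \<exists>u v. u < n \<and> v < n \<and> u \<noteq> v \<and> e = {u, v}}"

definition k_bounded :: "nat \<Rightarrow> nat \<Rightarrow> (nat set \<Rightarrow> 'c) \<Rightarrow> bool" where
  "k_bounded n k \<phi> \<longleftrightarrow> (\<forall>c. card {e \<in> Kn_edges n. \<phi> e = c} \<le> k)"

definition rainbow_part :: "(nat set \<Rightarrow> 'c) \<Rightarrow> nat set set \<Rightarrow> nat set set" where
  "rainbow_part \<phi> \<Gamma> = {e \<in> \<Gamma>. \<forall>e' \<in> \<Gamma>. \<phi> e' = \<phi> e \<longrightarrow> e' = e}"

definition degree :: "nat set set \<Rightarrow> nat \<Rightarrow> nat" where
  "degree \<Gamma> v = card {e \<in> \<Gamma>. v \<in> e}"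

definition Gnp_prob :: "nat \<Rightarrow> real \<Rightarrow> (nat set set \<Rightarrow> bool) \<Rightarrow> real" where
  "Gnp_prob n p P = (\<Sum>\<Gamma> \<in> {\<Gamma>. \<Gamma> \<subseteq> Kn_edges n \<and> P \<Gamma>}.
       p ^ card \<Gamma> * (1 - p) ^ (card (Kn_edges n) - card \<Gamma>))"

end

theory Submission
  imports Defs
begin

definition wt :: "real \<Rightarrow> 'a set \<Rightarrow> 'a set \<Rightarrow> real" where
  "wt p B S = p ^ card S * (1 - p) ^ (card B - card S)"

definition ev :: "real \<Rightarrow> 'a set \<Rightarrow> ('a set \<Rightarrow> real) \<Rightarrow> real" where
  "ev p B f = (\<Sum>S\<in>Pow B. wt p B S * f S)"

lemma ev_cong: "(\<And>S. S \<subseteq> B \<Longrightarrow> f S = g S) \<Longrightarrow> ev p B f = ev p B g"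
  unfolding ev_def by (auto intro: sum.cong)

lemma ev_add: "ev p B (\<lambda>S. f S + g S) = ev p B f + ev p B g"
  unfolding ev_def by (simp add: distrib_left sum.distrib)

lemma ev_diff: "ev p B (\<lambda>S. f S - g S) = ev p B f - ev p B g"
  unfolding ev_def by (simp add: right_diff_distrib sum_subtractf)

lemma ev_cmult: "ev p B (\<lambda>S. c * f S) = c * ev p B f"
  unfolding ev_def by (simp add: sum_distrib_left mult_ac)

lemma ev_sum: "ev p B (\<lambda>S. \<Sum>x\<in>X. f x S) = (\<Sum>x\<in>X. ev p B (f x))"
  unfolding ev_def by (simp add: sum_distrib_left sum.swap[of _ X])

lemma wt_nonneg: "0 \<le> p \<Longrightarrow> p \<le> 1 \<Longrightarrow> 0 \<le> wt p B S"
  unfolding wt_def by simp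

lemma ev_mono: "0 \<le> p \<Longrightarrow> p \<le> 1 \<Longrightarrow> (\<And>S. S \<subseteq> B \<Longrightarrow> f S \<le> g S) \<Longrightarrow> ev p B f \<le> ev p B g"
  unfolding ev_def by (auto intro!: sum_mono mult_left_mono wt_nonneg)

lemma ev_prod:
  assumes "finite B"
  shows "ev p B (\<lambda>S. \<Prod>y\<in>B. if y \<in> S then a y else b y) = (\<Prod>y\<in>B. p * a y + (1 - p) * b y)"
proof -
  have "(\<Prod>y\<in>B. p * a y + (1 - p) * b y) =
     (\<Sum>X\<in>Pow B. (\<Prod>x\<in>X. p * a x) * (\<Prod>x\<in>B-X. (1-p) * b x))"
    by (rule prod_add[OF assms])
  also have "\<dots> = ev p B (\<lambda>S. \<Prod>y\<in>B. if y \<in> S then a y else b y)"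
    unfolding ev_def
  proof (rule sum.cong[OF refl])
    fix X assume "X \<in> Pow B"
    hence XB: "X \<subseteq> B" by auto
    have fX: "finite X" using XB assms finite_subset by blast
    have cd: "card (B - X) = card B - card X" using XB fX by (simp add: card_Diff_subset)
    have "(\<Prod>y\<in>B. if y \<in> X then a y else b y) = (\<Prod>y\<in>X. a y) * (\<Prod>y\<in>B-X. b y)"
    proof -
      have "(\<Prod>y\<in>B. if y \<in> X then a y else b y) = prod a (B \<inter> {y. y \<in> X}) * prod b (B \<inter> - {y. y \<in> X})"
        by (rule prod.If_cases[OF assms])
      moreover have "B \<inter> {y. y \<in> X} = X" "B \<inter> - {y. y \<in> X} = B - X" using XB by auto
      ultimately show ?thesis by simp
    qed
    thus "(\<Prod>x\<in>X. p * a x) * (\<Prod>x\<in>B-X. (1-p) * b x) =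
        wt p B X * (\<Prod>y\<in>B. if y \<in> X then a y else b y)"
      unfolding wt_def by (simp add: prod.distrib cd mult_ac)
  qed
  finally show ?thesis by simp
qed

lemma ev_const:
  assumes "finite B" shows "ev p B (\<lambda>S. c) = c"
proof -
  have "ev p B (\<lambda>S. \<Prod>y\<in>B. if y \<in> S then 1 else 1) = 1"
    using ev_prod[OF assms, of p "\<lambda>_. 1" "\<lambda>_. 1"] by simp
  hence "ev p B (\<lambda>S. 1) = 1" by simp
  thus ?thesis using ev_cmult[of p B c "\<lambda>_. 1"] by simp
qed

lemma ev_split:
  assumes "finite A" "finite B" "A \<inter> B = {}"
  shows "ev p (A \<union> B) f = ev p A (\<lambda>S. ev p B (\<lambda>T. f (S \<union> T)))"
proof -
  have "ev p A (\<lambda>S. ev p B (\<lambda>T. f (S \<union> T))) =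
     (\<Sum>S\<in>Pow A. \<Sum>T\<in>Pow B. wt p A S * wt p B T * f (S \<union> T))"
    unfolding ev_def by (simp add: sum_distrib_left mult_ac)
  also have "\<dots> = (\<Sum>(S,T)\<in>Pow A \<times> Pow B. wt p A S * wt p B T * f (S \<union> T))"
    by (rule sum.cartesian_product)
  also have "\<dots> = (\<Sum>(S,T)\<in>Pow A \<times> Pow B. wt p (A \<union> B) (S \<union> T) * f (S \<union> T))"
  proof (rule sum.cong[OF refl], clarify)
    fix S T assume S: "S \<subseteq> A" and T: "T \<subseteq> B"
    have fS: "finite S" "finite T" using S T assms finite_subset by blast+
    have d: "S \<inter> T = {}" using S T assms(3) by auto
    have c1: "card (S \<union> T) = card S + card T" using fS d by (simp add: card_Un_disjoint)
    have c2: "card (A \<union> B) = card A + card B" using assms by (simp add: card_Un_disjoint)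
    have c3: "card S \<le> card A" "card T \<le> card B" using S T assms by (auto intro: card_mono)
    have "card (A \<union> B) - card (S \<union> T) = (card A - card S) + (card B - card T)"
      using c1 c2 c3 by simp
    thus "wt p A S * wt p B T * f (S \<union> T) = wt p (A \<union> B) (S \<union> T) * f (S \<union> T)"
      unfolding wt_def by (simp add: c1 power_add mult_ac)
  qed
  also have "\<dots> = (\<Sum>X\<in>Pow (A \<union> B). wt p (A \<union> B) X * f X)"
  proof -
    have bij: "bij_betw (\<lambda>(S,T). S \<union> T) (Pow A \<times> Pow B) (Pow (A \<union> B))"
      by (rule bij_betw_byWitness[where f' = "\<lambda>X. (X \<inter> A, X \<inter> B)"]) (use assms(3) in auto)
    show ?thesis
      using sum.reindex_bij_betw[OF bij, of "\<lambda>X. wt p (A \<union> B) X * f X"]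
      by (simp add: case_prod_unfold)
  qed
  finally show ?thesis unfolding ev_def by simp
qed

lemma ev_restrict:
  assumes "finite E" "B \<subseteq> E"
  shows "ev p E (\<lambda>G. g (G \<inter> B)) = ev p B g"
proof -
  have fB: "finite B" "finite (E - B)" using assms finite_subset by auto
  have E: "E = B \<union> (E - B)" using assms by auto
  have "ev p E (\<lambda>G. g (G \<inter> B)) = ev p B (\<lambda>S. ev p (E - B) (\<lambda>T. g ((S \<union> T) \<inter> B)))"
    by (subst E, rule ev_split) (use fB in auto)
  also have "\<dots> = ev p B (\<lambda>S. ev p (E - B) (\<lambda>T. g S))"
  proof (rule ev_cong)
    fix S assume "S \<subseteq> B"
    thus "ev p (E - B) (\<lambda>T. g ((S \<union> T) \<inter> B)) = ev p (E - B) (\<lambda>T. g S)"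
      by (intro ev_cong arg_cong[where f=g]) auto
  qed
  also have "\<dots> = ev p B g" using fB by (simp add: ev_const)
  finally show ?thesis .
qed

lemma ev_blocks:
  assumes "finite I" "\<And>i. i \<in> I \<Longrightarrow> finite (Bl i)"
    "\<And>i j. i \<in> I \<Longrightarrow> j \<in> I \<Longrightarrow> i \<noteq> j \<Longrightarrow> Bl i \<inter> Bl j = {}"
  shows "ev p (\<Union>i\<in>I. Bl i) (\<lambda>G. \<Prod>i\<in>I. g i (G \<inter> Bl i)) = (\<Prod>i\<in>I. ev p (Bl i) (g i))"
  using assms
proof (induction I rule: finite_induct)
  case empty
  then show ?case by (simp add: ev_const)
next
  case (insert j I)
  let ?U = "\<Union>i\<in>I. Bl i"
  have fU: "finite ?U" using insert by auto
  have fj: "finite (Bl j)" using insert by auto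
  have dj: "Bl j \<inter> ?U = {}" using insert by fastforce
  have "ev p (\<Union>i\<in>insert j I. Bl i) (\<lambda>G. \<Prod>i\<in>insert j I. g i (G \<inter> Bl i))
      = ev p (Bl j) (\<lambda>S. ev p ?U (\<lambda>T. \<Prod>i\<in>insert j I. g i ((S \<union> T) \<inter> Bl i)))"
    by (simp only: UN_insert, rule ev_split[OF fj fU dj])
  also have "\<dots> = ev p (Bl j) (\<lambda>S. g j S * (\<Prod>i\<in>I. ev p (Bl i) (g i)))"
  proof (rule ev_cong)
    fix S assume S: "S \<subseteq> Bl j"
    have "ev p ?U (\<lambda>T. \<Prod>i\<in>insert j I. g i ((S \<union> T) \<inter> Bl i))
        = ev p ?U (\<lambda>T. g j S * (\<Prod>i\<in>I. g i (T \<inter> Bl i)))"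
    proof (rule ev_cong)
      fix T assume T: "T \<subseteq> ?U"
      have 1: "(S \<union> T) \<inter> Bl j = S" using S T dj by auto
      have 2: "(S \<union> T) \<inter> Bl i = T \<inter> Bl i" if "i \<in> I" for i
      proof -
        have "Bl j \<inter> Bl i = {}" using insert.prems(2) that insert.hyps(2) by (metis insertCI)
        thus ?thesis using S by auto
      qed
      show "(\<Prod>i\<in>insert j I. g i ((S \<union> T) \<inter> Bl i)) = g j S * (\<Prod>i\<in>I. g i (T \<inter> Bl i))"
        using insert.hyps 1 2 by (simp cong: prod.cong)
    qed
    also have "\<dots> = g j S * (\<Prod>i\<in>I. ev p (Bl i) (g i))"
      using insert.IH insert.prems by (simp add: ev_cmult)
    finally show "ev p ?U (\<lambda>T. \<Prod>i\<in>insert j I. g i ((S \<union> T) \<inter> Bl i)) = g j S * (\<Prod>i\<in>I. ev p (Bl i) (g i))" .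
  qed
  also have "\<dots> = (\<Prod>i\<in>insert j I. ev p (Bl i) (g i))"
    using ev_cmult[of p "Bl j" "\<Prod>i\<in>I. ev p (Bl i) (g i)" "g j"] insert.hyps by (simp add: mult_ac)
  finally show ?case .
qed

lemma prod_if_single:
  assumes "finite C" "x \<in> C" "S \<subseteq> C"
  shows "(\<Prod>y\<in>C. if y \<in> S then (if y = x then 1 else q) else (if y = x then 0 else (1::real)))
     = (if x \<in> S then q ^ (card S - 1) else 0)"
proof -
  have "(\<Prod>y\<in>C. if y \<in> S then (if y = x then 1 else q) else (if y = x then 0 else (1::real)))
     = (if x \<in> S then (if x = x then 1 else q) else (if x = x then 0 else (1::real))) * (\<Prod>y\<in>C - {x}. if y \<in> S then (if y = x then 1 else q) else (if y = x then 0 else (1::real)))"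
    by (rule prod.remove[OF assms(1,2)])
  also have "(\<Prod>y\<in>C - {x}. if y \<in> S then (if y = x then 1 else q) else (if y = x then 0 else (1::real)))
     = (\<Prod>y\<in>C - {x}. if y \<in> S then q else 1)" by (rule prod.cong) auto
  also have "(\<Prod>y\<in>C - {x}. if y \<in> S then q else 1) = q ^ card ((C - {x}) \<inter> S)"
    using assms(1) by (simp add: prod.If_cases)
  also have "(C - {x}) \<inter> S = S - {x}" using assms by auto
  finally show ?thesis using assms finite_subset[OF assms(3,1)] by auto
qed

lemma prod_rhs_single:
  assumes "finite C" "x \<in> C"
  shows "(\<Prod>y\<in>C. p * (if y = x then 1 else q) + (1 - p) * (if y = x then 0 else (1::real)))
     = p * (p * q + (1 - p)) ^ (card C - 1)"
proof -
  have "(\<Prod>y\<in>C - {x}. p * (if y = x then 1 else q) + (1 - p) * (if y = x then 0 else (1::real)))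
     = (\<Prod>y\<in>C - {x}. p * q + (1 - p))" by (rule prod.cong) auto
  thus ?thesis using assms by (simp add: prod.remove)
qed

lemma ev_single_q:
  assumes "finite C" "x \<in> C"
  shows "ev p C (\<lambda>S. if x \<in> S then q ^ (card S - 1) else 0) = p * (p * q + (1 - p)) ^ (card C - 1)"
proof -
  have "ev p C (\<lambda>S. if x \<in> S then q ^ (card S - 1) else 0) =
    ev p C (\<lambda>S. \<Prod>y\<in>C. if y \<in> S then (if y = x then 1 else q) else (if y = x then 0 else (1::real)))"
    by (rule ev_cong) (use prod_if_single[OF assms] in simp)
  also have "\<dots> = p * (p * q + (1 - p)) ^ (card C - 1)"
    by (subst ev_prod[OF assms(1)]) (rule prod_rhs_single[OF assms])
  finally show ?thesis .
qed

definition Zf :: "'a set \<Rightarrow> 'a set \<Rightarrow> nat" where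
  "Zf Ac S = (if 2 \<le> card S then card (S \<inter> Ac) else 0)"

lemma Z_pointwise:
  assumes "finite S" "finite Ac"
  shows "(exp 1::real) ^ Zf Ac S \<le> 1 + 4 * (\<Sum>x\<in>Ac. if x \<in> S then exp 1 ^ (card S - 1) - 1 else 0)"
proof -
  have e1: "1 \<le> exp (1::real)" by simp
  have e3: "exp (1::real) \<le> 3" by (rule exp_le)
  have nn: "0 \<le> (if x \<in> S then exp 1 ^ (card S - 1) - 1 else (0::real))" for x
    using e1 by (simp add: one_le_power)
  have nns: "0 \<le> (\<Sum>x\<in>Ac. if x \<in> S then exp 1 ^ (card S - 1) - 1 else (0::real))"
    by (rule sum_nonneg) (use nn in auto)
  show ?thesis
  proof (cases "2 \<le> card S \<and> S \<inter> Ac \<noteq> {}")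
    case False
    hence "Zf Ac S = 0" unfolding Zf_def by auto
    thus ?thesis using nns by simp
  next
    case True
    then obtain x where x: "x \<in> S" "x \<in> Ac" by auto
    have fA: "finite Ac" by (rule assms(2))
    have "(if x \<in> S then exp 1 ^ (card S - 1) - 1 else 0) \<le> (\<Sum>x\<in>Ac. if x \<in> S then exp 1 ^ (card S - 1) - 1 else (0::real))"
      by (rule member_le_sum[OF x(2)]) (use nn fA in auto)
    hence h: "exp 1 ^ (card S - 1) - 1 \<le> (\<Sum>x\<in>Ac. if x \<in> S then exp 1 ^ (card S - 1) - 1 else (0::real))"
      using x by simp
    have z: "Zf Ac S \<le> card S" using True assms unfolding Zf_def by (auto intro: card_mono)
    define u where "u = exp (1::real) ^ (card S - 1)"
    have u1: "exp 1 \<le> u"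
    proof -
      have "1 \<le> card S - 1" using True by linarith
      thus ?thesis using power_increasing[of 1 "card S - 1" "exp (1::real)"] by (simp add: u_def)
    qed
    have es: "exp 1 ^ card S = exp 1 * u"
    proof -
      have "card S = Suc (card S - 1)" using True by simp
      thus ?thesis unfolding u_def by (metis power_Suc)
    qed
    have "(exp 1::real) ^ Zf Ac S \<le> exp 1 ^ card S" by (rule power_increasing[OF z e1])
    also have "\<dots> \<le> 1 + 4 * (u - 1)"
    proof -
      have a: "(4 - exp 1) * exp 1 \<le> (4 - exp 1) * u" by (rule mult_left_mono) (use u1 e3 in auto)
      have b: "0 \<le> (exp 1 - 1) * (3 - exp (1::real))" using e1 e3 by simp
      show ?thesis unfolding es using a b by (simp add: algebra_simps)
    qed
    also have "\<dots> \<le> 1 + 4 * (\<Sum>x\<in>Ac. if x \<in> S then exp 1 ^ (card S - 1) - 1 else (0::real))"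
      using h unfolding u_def by simp
    finally show ?thesis .
  qed
qed

lemma base_pow_bound:
  assumes "m \<le> k" "0 \<le> p" "p \<le> 1" "p * real k \<le> 1/1000"
  shows "(p * exp 1 + (1 - p)) ^ m \<le> 1 + 1/250"
proof -
  have e3: "exp (1::real) \<le> 3" by (rule exp_le)
  have b0: "0 \<le> p * exp 1 + (1 - p)" using assms by (simp add: add_nonneg_nonneg)
  have b1: "p * exp 1 + (1 - p) \<le> exp (2 * p)"
  proof -
    have "p * exp 1 + (1 - p) \<le> 1 + 2 * p" using e3 assms(2) mult_left_mono[OF e3 assms(2)] by linarith
    also have "\<dots> \<le> exp (2 * p)" by (rule exp_ge_add_one_self)
    finally show ?thesis .
  qed
  have "(p * exp 1 + (1 - p)) ^ m \<le> exp (2 * p) ^ m" by (rule power_mono[OF b1 b0])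
  also have "\<dots> = exp (real m * (2 * p))" by (simp add: exp_of_nat_mult)
  also have "\<dots> \<le> exp (1/500)"
  proof -
    have "real m * p \<le> real k * p" using assms by (intro mult_right_mono) auto
    hence "real m * p \<le> 1/1000" using assms(4) by (simp add: mult.commute)
    hence "real m * (2 * p) \<le> 1/500" by simp
    thus ?thesis by simp
  qed
  also have "\<dots> \<le> 1 + 1/250"
    using exp_bound_lemma[of "1/500::real"] by simp
  finally show ?thesis .
qed

lemma block_bound:
  assumes "finite C" "Ac \<subseteq> C" "card C \<le> k" "0 \<le> p" "p \<le> 1" "p * real k \<le> 1/1000"
  shows "ev p C (\<lambda>S. exp 1 ^ Zf Ac S) \<le> 1 + real (card Ac) * p / 60"
proof -
  have fA: "finite Ac" using assms finite_subset by blast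
  have "ev p C (\<lambda>S. exp 1 ^ Zf Ac S) \<le>
     ev p C (\<lambda>S. 1 + 4 * (\<Sum>x\<in>Ac. (if x \<in> S then exp 1 ^ (card S - 1) else 0) - (if x \<in> S then 1 ^ (card S - 1) else 0)))"
  proof (rule ev_mono[OF assms(4,5)])
    fix S assume "S \<subseteq> C"
    hence fS: "finite S" using assms finite_subset by blast
    have "(\<Sum>x\<in>Ac. if x \<in> S then exp 1 ^ (card S - 1) - 1 else (0::real)) =
       (\<Sum>x\<in>Ac. (if x \<in> S then exp 1 ^ (card S - 1) else 0) - (if x \<in> S then 1 ^ (card S - 1) else 0))"
      by (rule sum.cong) auto
    thus "(exp 1::real) ^ Zf Ac S \<le> 1 + 4 * (\<Sum>x\<in>Ac. (if x \<in> S then exp 1 ^ (card S - 1) else 0) - (if x \<in> S then 1 ^ (card S - 1) else 0))"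
      using Z_pointwise[OF fS fA] by simp
  qed
  also have "\<dots> = 1 + 4 * (\<Sum>x\<in>Ac. p * (p * exp 1 + (1 - p)) ^ (card C - 1) - p * (p * 1 + (1 - p)) ^ (card C - 1))"
  proof -
    have "\<And>x. x \<in> Ac \<Longrightarrow> ev p C (\<lambda>S. (if x \<in> S then exp 1 ^ (card S - 1) else 0) - (if x \<in> S then 1 ^ (card S - 1) else 0))
       = p * (p * exp 1 + (1 - p)) ^ (card C - 1) - p * (p * 1 + (1 - p)) ^ (card C - 1)"
      using assms by (subst ev_diff) (simp add: ev_single_q[OF assms(1)] subsetD del: power_one)
    thus ?thesis using assms by (simp add: ev_add ev_const ev_cmult ev_sum del: power_one)
  qed
  also have "\<dots> \<le> 1 + 4 * (\<Sum>x\<in>Ac. p * (1/250))"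
  proof -
    have "(p * exp 1 + (1 - p)) ^ (card C - 1) \<le> 1 + 1/250"
      by (rule base_pow_bound) (use assms in auto)
    hence "p * (p * exp 1 + (1 - p)) ^ (card C - 1) \<le> p * (1 + 1/250)"
      using assms(4) by (rule mult_left_mono)
    thus ?thesis by (intro add_left_mono mult_left_mono sum_mono) (auto simp: algebra_simps)
  qed
  also have "\<dots> \<le> 1 + real (card Ac) * p / 60" using assms by simp
  finally show ?thesis .
qed


lemma finite_Kn: "finite (Kn_edges n)"
proof -
  have "Kn_edges n \<subseteq> Pow {..<n}" unfolding Kn_edges_def by auto
  thus ?thesis by (rule finite_subset) simp
qed

lemma card_star:
  assumes "v < n"
  shows "card {e \<in> Kn_edges n. v \<in> e} = n - 1"
proof -
  have eq: "{e \<in> Kn_edges n. v \<in> e} = (\<lambda>u. {u, v}) ` ({..<n} - {v})"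
    unfolding Kn_edges_def using assms by (auto simp: insert_commute)
  have inj: "inj_on (\<lambda>u. {u, v}) ({..<n} - {v})"
    by (auto simp: inj_on_def doubleton_eq_iff)
  show ?thesis unfolding eq using assms by (simp add: card_image[OF inj])
qed

lemma decomp:
  fixes \<phi> :: "nat set \<Rightarrow> 'c" and v :: nat
  assumes G: "G \<subseteq> E" and fE: "finite E"
  defines "A \<equiv> {e \<in> E. v \<in> e}"
  shows "card {e \<in> G. v \<in> e} \<le> card {e \<in> rainbow_part \<phi> G. v \<in> e}
     + (\<Sum>c\<in>\<phi> ` A. Zf {e \<in> A. \<phi> e = c} (G \<inter> {e \<in> E. \<phi> e = c}))"
proof -
  let ?X = "{e \<in> G. v \<in> e}"
  let ?R = "{e \<in> rainbow_part \<phi> G. v \<in> e}"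
  define W where "W c = (if 2 \<le> card (G \<inter> {e \<in> E. \<phi> e = c}) then G \<inter> {e \<in> A. \<phi> e = c} else {})" for c
  have fG: "finite G" using G fE finite_subset by blast
  have fA: "finite A" unfolding A_def using fE by simp
  have sub: "?X \<subseteq> ?R \<union> (\<Union>c\<in>\<phi> ` A. W c)"
  proof
    fix e assume e: "e \<in> ?X"
    show "e \<in> ?R \<union> (\<Union>c\<in>\<phi> ` A. W c)"
    proof (cases "e \<in> ?R")
      case False
      then obtain e' where e': "e' \<in> G" "\<phi> e' = \<phi> e" "e' \<noteq> e"
        using e unfolding rainbow_part_def by auto
      have eA: "e \<in> A" using e G unfolding A_def by auto
      have "{e, e'} \<subseteq> G \<inter> {x \<in> E. \<phi> x = \<phi> e}" using e e' G by auto
      hence "card {e, e'} \<le> card (G \<inter> {x \<in> E. \<phi> x = \<phi> e})"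
        by (rule card_mono[rotated]) (use fG in auto)
      hence "2 \<le> card (G \<inter> {x \<in> E. \<phi> x = \<phi> e})" using e' by simp
      hence "e \<in> W (\<phi> e)" unfolding W_def using e eA by auto
      thus ?thesis using eA by blast
    qed simp
  qed
  have "card ?X \<le> card (?R \<union> (\<Union>c\<in>\<phi> ` A. W c))"
    by (rule card_mono[OF _ sub]) (use fG in \<open>auto simp: W_def rainbow_part_def\<close>)
  also have "\<dots> \<le> card ?R + card (\<Union>c\<in>\<phi> ` A. W c)" by (rule card_Un_le)
  also have "card (\<Union>c\<in>\<phi> ` A. W c) \<le> (\<Sum>c\<in>\<phi> ` A. card (W c))"
    by (rule card_UN_le) (use fA in simp)
  also have "(\<Sum>c\<in>\<phi> ` A. card (W c)) = (\<Sum>c\<in>\<phi> ` A. Zf {e \<in> A. \<phi> e = c} (G \<inter> {e \<in> E. \<phi> e = c}))"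
  proof (rule sum.cong[OF refl])
    fix c
    have "G \<inter> {e \<in> E. \<phi> e = c} \<inter> {e \<in> A. \<phi> e = c} = G \<inter> {e \<in> A. \<phi> e = c}"
      unfolding A_def by auto
    thus "card (W c) = Zf {e \<in> A. \<phi> e = c} (G \<inter> {e \<in> E. \<phi> e = c})"
      unfolding W_def Zf_def by auto
  qed
  finally show ?thesis by simp
qed

lemma ev_pow_card:
  assumes "finite A"
  shows "ev p A (\<lambda>S. q ^ card S) = (p * q + (1 - p)) ^ card A"
proof -
  have "ev p A (\<lambda>S. q ^ card S) = ev p A (\<lambda>S. \<Prod>y\<in>A. if y \<in> S then q else 1)"
  proof (rule ev_cong)
    fix S assume "S \<subseteq> A"
    hence "A \<inter> {y. y \<in> S} = S" by auto
    thus "q ^ card S = (\<Prod>y\<in>A. if y \<in> S then q else 1)"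
      using assms by (simp add: prod.If_cases)
  qed
  also have "\<dots> = (p * q + (1 - p)) ^ card A" by (simp add: ev_prod[OF assms])
  finally show ?thesis .
qed

lemma vertex_bound:
  fixes \<phi> :: "nat set \<Rightarrow> 'c"
  assumes kb: "k_bounded n k \<phi>" and p0: "0 \<le> p" and p1: "p \<le> 1" and pk: "p * real k \<le> 1/1000" and v: "v < n"
  shows "ev p (Kn_edges n) (\<lambda>G. if 2 * degree G v \<le> 3 * degree (rainbow_part \<phi> G) v then 0 else 1)
     \<le> 2 * exp (- (p * real (n - 1) / 16))"
proof -
  define E where "E = Kn_edges n"
  define A where "A = {e \<in> E. v \<in> e}"
  define K where "K = \<phi> ` A"
  define C where "C c = {e \<in> E. \<phi> e = c}" for c
  define Ac where "Ac c = {e \<in> A. \<phi> e = c}" for c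
  define a where "a = card A"
  define D where "D = p * real a / 4"
  define Z where "Z G = (\<Sum>c\<in>K. Zf (Ac c) (G \<inter> C c))" for G
  define F1 where "F1 G = exp D * exp (-1) ^ card (G \<inter> A)" for G
  define F2 where "F2 G = exp (- (D / 3)) * exp 1 ^ Z G" for G
  have fE: "finite E" unfolding E_def by (rule finite_Kn)
  have fA: "finite A" unfolding A_def using fE by simp
  have fK: "finite K" unfolding K_def using fA by simp
  have fC: "finite (C c)" for c unfolding C_def using fE by simp
  have aeq: "a = n - 1" unfolding a_def A_def E_def by (rule card_star[OF v])
  have AE: "A \<subseteq> E" unfolding A_def by auto
  have pw: "(if 2 * degree G v \<le> 3 * degree (rainbow_part \<phi> G) v then 0 else 1) \<le> F1 G + F2 G"
    if G: "G \<subseteq> E" for G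
  proof -
    have n1: "0 \<le> F1 G" "0 \<le> F2 G" unfolding F1_def F2_def by auto
    have XA: "{e \<in> G. v \<in> e} = G \<inter> A" using G unfolding A_def by auto
    have dec: "card {e \<in> G. v \<in> e} \<le> card {e \<in> rainbow_part \<phi> G. v \<in> e} + Z G"
      using decomp[OF G fE, of v \<phi>] unfolding Z_def Ac_def C_def K_def A_def by simp
    show ?thesis
    proof (cases "2 * degree G v \<le> 3 * degree (rainbow_part \<phi> G) v")
      case True thus ?thesis using n1 by simp
    next
      case bad: False
      show ?thesis
      proof (cases "real (card (G \<inter> A)) \<le> D")
        case True
        have "1 \<le> exp (D - real (card (G \<inter> A)))" using True by simp
        also have "\<dots> = F1 G" unfolding F1_def
          by (simp add: exp_diff exp_of_nat_mult[symmetric] exp_minus field_simps)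
        finally show ?thesis using bad n1 by simp
      next
        case False
        show ?thesis
        proof (cases "D \<le> 3 * real (Z G)")
          case True
          have "1 \<le> exp (real (Z G) - D / 3)" using True by simp
          also have "\<dots> = F2 G"
          proof -
            have "(exp 1::real) ^ Z G = exp (real (Z G))" using exp_of_nat_mult[of "Z G" "1::real"] by simp
            hence "F2 G = exp (- (D / 3) + real (Z G))" unfolding F2_def by (simp only: exp_add)
            thus ?thesis by simp
          qed
          finally show ?thesis using bad n1 by simp
        next
          case False2: False
          have "2 * degree G v \<le> 3 * degree (rainbow_part \<phi> G) v"
            using dec False False2 unfolding degree_def XA by linarith
          thus ?thesis using bad by simp
        qed
      qed
    qed
  qed
  have "ev p E (\<lambda>G. if 2 * degree G v \<le> 3 * degree (rainbow_part \<phi> G) v then 0 else 1)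
      \<le> ev p E (\<lambda>G. F1 G + F2 G)"
    by (rule ev_mono[OF p0 p1]) (rule pw)
  also have "\<dots> = ev p E F1 + ev p E F2" by (rule ev_add)
  also have "ev p E F1 \<le> exp (- (p * real a / 4))"
  proof -
    have "ev p E F1 = exp D * ev p E (\<lambda>G. exp (-1) ^ card (G \<inter> A))"
      unfolding F1_def by (rule ev_cmult)
    also have "ev p E (\<lambda>G. exp (-1) ^ card (G \<inter> A)) = ev p A (\<lambda>S. exp (-1) ^ card S)"
      by (rule ev_restrict[OF fE AE])
    also have "\<dots> = (p * exp (-1) + (1 - p)) ^ a" unfolding a_def by (rule ev_pow_card[OF fA])
    also have "\<dots> \<le> exp (- p / 2) ^ a"
    proof (rule power_mono)
      have e2: "2 \<le> exp (1::real)" using exp_ge_add_one_self[of "1::real"] by simp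
      have "exp (-1::real) \<le> 1/2" using e2 by (simp add: exp_minus field_simps)
      hence "p * exp (-1) \<le> p * (1/2)" using p0 by (rule mult_left_mono)
      hence "p * exp (-1) + (1 - p) \<le> 1 + (- p / 2)" by simp
      also have "\<dots> \<le> exp (- p / 2)" by (rule exp_ge_add_one_self)
      finally show "p * exp (-1) + (1 - p) \<le> exp (- p / 2)" .
      show "0 \<le> p * exp (-1) + (1 - p)" using p0 p1 by simp
    qed
    also have "exp D * exp (- p / 2) ^ a = exp (- (p * real a / 4))"
      unfolding D_def by (simp add: exp_of_nat_mult[symmetric] exp_add[symmetric] field_simps)
    finally show ?thesis by simp
  qed
  also have "ev p E F2 \<le> exp (- (p * real a / 15))"
  proof -
    define U where "U = (\<Union>c\<in>K. C c)"
    have UE: "U \<subseteq> E" unfolding U_def C_def by auto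
    have disj: "C i \<inter> C j = {}" if "i \<noteq> j" for i j using that unfolding C_def by auto
    have "ev p E F2 = exp (- (D / 3)) * ev p E (\<lambda>G. exp 1 ^ Z G)"
      unfolding F2_def by (rule ev_cmult)
    also have "ev p E (\<lambda>G. exp 1 ^ Z G) = ev p E (\<lambda>G. (\<lambda>S. \<Prod>c\<in>K. exp 1 ^ Zf (Ac c) (S \<inter> C c)) (G \<inter> U))"
    proof (rule ev_cong)
      fix G assume "G \<subseteq> E"
      have "\<And>c. c \<in> K \<Longrightarrow> G \<inter> U \<inter> C c = G \<inter> C c" unfolding U_def by auto
      thus "exp 1 ^ Z G = (\<lambda>S. \<Prod>c\<in>K. exp 1 ^ Zf (Ac c) (S \<inter> C c)) (G \<inter> U)"
        unfolding Z_def by (simp add: power_sum)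
    qed
    also have "\<dots> = ev p U (\<lambda>S. \<Prod>c\<in>K. exp 1 ^ Zf (Ac c) (S \<inter> C c))"
      by (rule ev_restrict[OF fE UE])
    also have "\<dots> = (\<Prod>c\<in>K. ev p (C c) (\<lambda>S. exp 1 ^ Zf (Ac c) S))"
      unfolding U_def by (rule ev_blocks[OF fK fC disj])
    also have "\<dots> \<le> (\<Prod>c\<in>K. exp (real (card (Ac c)) * p / 60))"
    proof (rule prod_mono, rule conjI)
      fix c assume "c \<in> K"
      have cC: "card (C c) \<le> k" using kb unfolding k_bounded_def C_def E_def by blast
      have "ev p (C c) (\<lambda>S. exp 1 ^ Zf (Ac c) S) \<le> 1 + real (card (Ac c)) * p / 60"
        by (rule block_bound[OF fC _ cC p0 p1 pk]) (auto simp: Ac_def C_def A_def)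
      also have "\<dots> \<le> exp (real (card (Ac c)) * p / 60)" by (rule exp_ge_add_one_self)
      finally show "ev p (C c) (\<lambda>S. exp 1 ^ Zf (Ac c) S) \<le> exp (real (card (Ac c)) * p / 60)" .
      show "0 \<le> ev p (C c) (\<lambda>S. exp 1 ^ Zf (Ac c) S)"
        using ev_mono[OF p0 p1, of "C c" "\<lambda>_. 0" "\<lambda>S. exp 1 ^ Zf (Ac c) S"] ev_const[OF fC] by simp
    qed
    also have "\<dots> = exp ((\<Sum>c\<in>K. real (card (Ac c))) * p / 60)"
      by (simp add: exp_sum[OF fK, symmetric] sum_distrib_right sum_divide_distrib)
    also have "(\<Sum>c\<in>K. real (card (Ac c))) = real a"
    proof -
      have "A = (\<Union>c\<in>K. Ac c)" unfolding K_def Ac_def by auto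
      hence "card A = (\<Sum>c\<in>K. card (Ac c))"
        using card_UN_disjoint[OF fK, of Ac] fA unfolding Ac_def by auto
      thus ?thesis unfolding a_def by simp
    qed
    finally have "ev p E F2 \<le> exp (- (D / 3)) * exp (real a * p / 60)"
      by (simp add: mult_left_mono)
    also have "\<dots> = exp (- (p * real a / 15))"
      unfolding D_def by (simp add: exp_add[symmetric] field_simps)
    finally show ?thesis .
  qed
  also have "exp (- (p * real a / 4)) + exp (- (p * real a / 15)) \<le> 2 * exp (- (p * real (n - 1) / 16))"
  proof -
    have pa: "0 \<le> p * real a" using p0 by simp
    have "exp (- (p * real a / 4)) \<le> exp (- (p * real a / 16))" using pa by simp
    moreover have "exp (- (p * real a / 15)) \<le> exp (- (p * real a / 16))" using pa by simp
    ultimately have "exp (- (p * real a / 4)) + exp (- (p * real a / 15)) \<le> 2 * exp (- (p * real a / 16))"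
      by linarith
    thus ?thesis unfolding aeq .
  qed
  finally show ?thesis unfolding E_def by simp
qed

lemma Gnp_ev: "Gnp_prob n p P = ev p (Kn_edges n) (\<lambda>G. if P G then 1 else 0)"
proof -
  have "{\<Gamma>. \<Gamma> \<subseteq> Kn_edges n \<and> P \<Gamma>} = {\<Gamma>\<in>Pow (Kn_edges n). P \<Gamma>}" by auto
  thus ?thesis unfolding Gnp_prob_def ev_def wt_def
    using sum.inter_filter[of "Pow (Kn_edges n)" "\<lambda>\<Gamma>. p ^ card \<Gamma> * (1 - p) ^ (card (Kn_edges n) - card \<Gamma>)" P]
      finite_Kn[of n] by (simp add: if_distrib cong: if_cong)
qed

lemma global_bound:
  fixes \<phi> :: "nat set \<Rightarrow> 'c"
  assumes kb: "k_bounded n k \<phi>" and p0: "0 \<le> p" and p1: "p \<le> 1" and pk: "p * real k \<le> 1/1000"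
  shows "1 - real n * (2 * exp (- (p * real (n - 1) / 16))) \<le>
      Gnp_prob n p (\<lambda>\<Gamma>. \<forall>v < n. 3 * degree (rainbow_part \<phi> \<Gamma>) v \<ge> 2 * degree \<Gamma> v)"
    and "Gnp_prob n p (\<lambda>\<Gamma>. \<forall>v < n. 3 * degree (rainbow_part \<phi> \<Gamma>) v \<ge> 2 * degree \<Gamma> v) \<le> 1"
proof -
  let ?E = "Kn_edges n"
  let ?g = "\<lambda>v G. if 2 * degree G v \<le> 3 * degree (rainbow_part \<phi> G) v then 0 else (1::real)"
  let ?P = "\<lambda>\<Gamma>. \<forall>v < n. 3 * degree (rainbow_part \<phi> \<Gamma>) v \<ge> 2 * degree \<Gamma> v"
  have fE: "finite ?E" by (rule finite_Kn)
  have "1 - real n * (2 * exp (- (p * real (n - 1) / 16))) \<le> 1 - (\<Sum>v<n. ev p ?E (?g v))"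
  proof -
    have "(\<Sum>v<n. ev p ?E (?g v)) \<le> (\<Sum>v<n. 2 * exp (- (p * real (n - 1) / 16)))"
      by (rule sum_mono) (rule vertex_bound[OF kb p0 p1 pk], simp)
    moreover have "(\<Sum>v<n. 2 * exp (- (p * real (n - 1) / 16))) = real n * (2 * exp (- (p * real (n - 1) / 16)))"
      by (simp only: sum_constant card_lessThan)
    ultimately show ?thesis by linarith
  qed
  also have "\<dots> = ev p ?E (\<lambda>G. 1 - (\<Sum>v<n. ?g v G))"
    by (simp add: ev_diff ev_sum ev_const[OF fE])
  also have "\<dots> \<le> ev p ?E (\<lambda>G. if ?P G then 1 else 0)"
  proof (rule ev_mono[OF p0 p1])
    fix G
    show "1 - (\<Sum>v<n. ?g v G) \<le> (if ?P G then 1 else 0)"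
    proof (cases "?P G")
      case True
      have "0 \<le> (\<Sum>v<n. ?g v G)" by (rule sum_nonneg) simp
      thus ?thesis using True by simp
    next
      case False
      then obtain v where v: "v < n" "\<not> 2 * degree G v \<le> 3 * degree (rainbow_part \<phi> G) v" by auto
      have "?g v G \<le> (\<Sum>v<n. ?g v G)" by (rule member_le_sum) (use v in auto)
      thus ?thesis using v False by simp
    qed
  qed
  finally show "1 - real n * (2 * exp (- (p * real (n - 1) / 16))) \<le> Gnp_prob n p ?P"
    by (simp add: Gnp_ev)
  have "ev p ?E (\<lambda>G. if ?P G then 1 else 0) \<le> ev p ?E (\<lambda>G. 1)"
    by (rule ev_mono[OF p0 p1]) simp
  thus "Gnp_prob n p ?P \<le> 1" by (simp add: Gnp_ev ev_const[OF fE])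
qed

lemma asym_bound:
  fixes x :: real and m :: nat
  assumes "2 \<le> m" "10^6 * ln (real m) / real m \<le> x"
  shows "real m * (2 * exp (- (x * real (m - 1) / 16))) \<le> 2 / real m"
proof -
  have m0: "0 < real m" using assms by simp
  have ln0: "0 \<le> ln (real m)" using assms by simp
  have "0 \<le> 10^6 * ln (real m) / real m" using ln0 m0 by simp
  hence x0: "0 \<le> x" using assms(2) by linarith
  have xm: "10^6 * ln (real m) \<le> x * real m" using assms(2) m0 by (simp add: field_simps)
  have m1: "real m / 2 \<le> real (m - 1)" using assms by (simp add: of_nat_diff)
  have "x * (real m / 2) \<le> x * real (m - 1)" using m1 x0 by (rule mult_left_mono)
  hence "2 * ln (real m) \<le> x * real (m - 1) / 16" using xm ln0 by simp
  hence "exp (- (x * real (m - 1) / 16)) \<le> exp (- (2 * ln (real m)))" by simp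
  also have "\<dots> = 1 / (real m)^2"
  proof -
    have "exp (2 * ln (real m)) = (real m)^2"
      using m0 exp_of_nat_mult[of 2 "ln (real m)"] by simp
    thus ?thesis by (simp add: exp_minus field_simps)
  qed
  finally have "2 * exp (- (x * real (m - 1) / 16)) \<le> 2 * (1 / (real m)^2)" by simp
  hence "real m * (2 * exp (- (x * real (m - 1) / 16))) \<le> real m * (2 * (1 / (real m)^2))"
    using m0 by (intro mult_left_mono) auto
  also have "\<dots> = 2 / real m" using m0 by (simp add: power2_eq_square)
  finally show ?thesis .
qed

theorem lemma3p2:
  fixes p :: "nat \<Rightarrow> real" and k :: "nat \<Rightarrow> nat" and \<phi> :: "nat \<Rightarrow> nat set \<Rightarrow> 'c"
  assumes "eventually (\<lambda>n. 0 \<le> p n \<and> p n \<le> 1) sequentially"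
    and "eventually (\<lambda>n. p n \<ge> 10^6 * ln (real n) / real n) sequentially"
    and "eventually (\<lambda>n. p n * real (k n) \<le> 10 powr (-3)) sequentially"
    and "eventually (\<lambda>n. k_bounded n (k n) (\<phi> n)) sequentially"
  shows "(\<lambda>n. Gnp_prob n (p n)
            (\<lambda>\<Gamma>. \<forall>v < n. 3 * degree (rainbow_part (\<phi> n) \<Gamma>) v \<ge> 2 * degree \<Gamma> v))
         \<longlonglongrightarrow> 1"
proof -
  let ?f = "\<lambda>n. Gnp_prob n (p n)
            (\<lambda>\<Gamma>. \<forall>v < n. 3 * degree (rainbow_part (\<phi> n) \<Gamma>) v \<ge> 2 * degree \<Gamma> v)"
  have pw: "(10::real) powr (-3) = 1/1000"
    by (simp add: powr_minus powr_realpow)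
  have ev: "eventually (\<lambda>n. 1 - 2 / real n \<le> ?f n \<and> ?f n \<le> 1) sequentially"
    using assms(1,2,3,4) eventually_ge_at_top[of "2::nat"]
  proof eventually_elim
    case (elim n)
    have pk: "p n * real (k n) \<le> 1/1000" using elim(3) pw by simp
    note gb = global_bound[OF elim(4) _ _ pk, of] 
    have "1 - 2 / real n \<le> 1 - real n * (2 * exp (- (p n * real (n - 1) / 16)))"
      using asym_bound[OF elim(5) elim(2)] by simp
    also have "\<dots> \<le> ?f n" using gb elim(1) by auto
    finally show ?case using gb elim(1) by auto
  qed
  have lo: "(\<lambda>n. 1 - 2 / real n) \<longlonglongrightarrow> 1"
    using tendsto_diff[OF tendsto_const[of "1::real"] lim_const_over_n[of "2::real"]] by simp
  show ?thesis
    by (rule tendsto_sandwich[OF _ _ lo tendsto_const]) (use ev in \<open>auto elim: eventually_mono\<close>)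
qed

end
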